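(* Let $v$ be a finite place of $F$ and $\psi:N\to S^1$ a homomorphism; let $\chi:=\psi\circ\log_{\mathcal T,v}$, a character of $\mathcal T(F_v)$ trivial on $\mathcal T(\mathcal O_v):=\ker\log_{\mathcal T,v}$. Let $s\in\mathbb C^I$ with $\operatorname{Re}s_\rho>0$ for all $\rho\in\Sigma(1)$. Then $$\int_{\mathcal T(F_v)}H_v(s,x)^{-1}\overline{\chi(x)}\,d\mu_v(x)=\sum_{n\in N}q_v^{-\varphi_s(n)}\overline{\psi(n)}=R_\Sigma(\mathbf x),$$ (absolutely convergent), where $\mathbf x=(x_i)_{i\in I}$ with $x_\rho=q_v^{-\Xi_\rho(s)}\overline{\psi(b_\rho,0)}$ for $\rho\in\Sigma(1)$ and $x_{\mathcal Y}=q_v^{-\Xi_{\mathcal Y}(s)}\overline{\psi(\mathcal Y)}$ for $\mathcal Y\in\pi_0^*$.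
   Context: Let $F$ be a number field; for a finite place $v$, $\operatorname{ord}_v$ is the normalized valuation and $q_v$ the residue field cardinality. Stacky fan $(\Sigma,N,\beta)$: $N$ finitely generated abelian of rank $d$, $\Sigma$ a complete simplicial rational fan in $N_{\mathbb Q}$, $\beta:\mathbb Z^{\Sigma(1)}\to N$ with finite cokernel and image of $\beta(e_\rho)$ a nonzero vector on $\rho$. Fix $N=N^{\mathrm{rig}}\oplus G^D$, $N^{\mathrm{rig}}=\mathbb Z^d$, $G^D=\bigoplus_{i=1}^\ell\mathbb Z/n_i\mathbb Z$; $b_\rho$ is the $N^{\mathrm{rig}}$-component of $\beta(e_\rho)$. $\mathcal T(F_v)=(F_v^\times)^d\times\prod_iF_v^\times/(F_v^\times)^{n_i}$, $\log_{\mathcal T,v}((t_j),([u_i]))=((\operatorname{ord}_vt_j)_j,(\operatorname{ord}_vu_i\bmod n_i)_i)\in N$; $\mu_v$ is the Haar measure on $\mathcal T(F_v)$ with $\mu_v(\mathcal T(\mathcal O_v))=1$. For $y\in N^{\mathrm{rig}}_{\mathbb R}$ in a cone $\sigma$ write $y=\sum_{\rho\in\sigma(1)}a_\rho(y)b_\rho$, $a_\rho(y)\ge0$, $a_\rho(y)=0$ for $\rho\notin\sigma(1)$; for $n=(y,g)$, $a_\rho(n)=a_\rho(y)$, $q(n)=(\sum_\rho\{a_\rho(y)\}b_\rho,g)$; $\pi_0^*:=q(N)\setminus\{(0,0)\}$, $I:=\Sigma(1)\sqcup\pi_0^*$. $\Xi_\rho(s)=s_\rho$, $\Xi_{\mathcal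 Y}(s)=s_{\mathcal Y}+\sum_\rho a_\rho(\mathcal Y)s_\rho$. $\varphi_s(n)=s_{q(n)}+\sum_\rho a_\rho(n)s_\rho$ if $q(n)\ne(0,0)$, else $\sum_\rho a_\rho(n)s_\rho$; $H_v(s,x)=q_v^{\varphi_s(\log_{\mathcal T,v}x)}$. For $\sigma\in\Sigma$ (including $\{0\}$; empty products $=1$) $$R_\sigma:=\frac{\prod_{\rho\in\sigma(1)}X_\rho+\sum_{\mathcal Y=(y,g)\in\pi_0^*,\ y\in\sigma}X_{\mathcal Y}\prod_{\rho\in\sigma(1),\,a_\rho(\mathcal Y)=0}X_\rho}{\prod_{\rho\in\sigma(1)}(1-X_\rho)},\qquad R_\Sigma:=\sum_{\sigma\in\Sigma}R_\sigma.$$ *)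

theory Defs
  imports "HOL-Analysis.Analysis" "HOL-Computational_Algebra.Primes"
begin

text \<open>Elements of N = N^rig (+) G^D, N^rig = Z^d (d = CARD('d)),
  G^D = (+)_{i<l} Z/n_i Z with ns = [n_1,...,n_l]; a torsion element is a function
  g :: nat => int with 0 <= g i < n_i for i < l and g i = 0 for i >= l.\<close>

type_synonym 'd Nel = "(int ^ 'd) \<times> (nat \<Rightarrow> int)"

definition Nset :: "nat list \<Rightarrow> ('d::finite) Nel set" where
  "Nset ns = {(y, g). \<forall>i. (i < length ns \<longrightarrow> 0 \<le> g i \<and> g i < int (ns ! i))
                          \<and> (length ns \<le> i \<longrightarrow> g i = 0)}"

definition zeroN :: "('d::finite) Nel" where
  "zeroN = (0, (\<lambda>i. 0))"

definition addN :: "nat list \<Rightarrow> ('d::finite) Nel \<Rightarrow> 'd Nel \<Rightarrow> 'd Nel" where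
  "addN ns n m = (fst n + fst m,
     (\<lambda>i. if i < length ns then (snd n i + snd m i) mod int (ns ! i) else 0))"

definition smultN :: "nat list \<Rightarrow> int \<Rightarrow> ('d::finite) Nel \<Rightarrow> 'd Nel" where
  "smultN ns k n = ((\<chi> j. k * (fst n $ j)),
     (\<lambda>i. if i < length ns then (k * snd n i) mod int (ns ! i) else 0))"

text \<open>The image of beta : Z^Sigma(1) -> N, beta(e_rho) = (b rho, gb rho).\<close>
definition beta_image :: "nat list \<Rightarrow> ('r::finite \<Rightarrow> int ^ ('d::finite)) \<Rightarrow> ('r \<Rightarrow> nat \<Rightarrow> int)
    \<Rightarrow> 'd Nel set" where
  "beta_image ns b gb = {n. \<exists>k :: 'r \<Rightarrow> int.
      n = ((\<chi> j. \<Sum>\<rho>\<in>UNIV. k \<rho> * (b \<rho> $ j)),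
           (\<lambda>i. if i < length ns then (\<Sum>\<rho>\<in>UNIV. k \<rho> * gb \<rho> i) mod int (ns ! i) else 0))}"

definition rvec :: "int ^ ('d::finite) \<Rightarrow> real ^ 'd" where
  "rvec y = (\<chi> j. real_of_int (y $ j))"

text \<open>The cone spanned by the rays in S (rays indexed by the finite type 'r = Sigma(1),
  the ray rho being spanned by b rho).\<close>
definition cone_of :: "('r::finite \<Rightarrow> int ^ ('d::finite)) \<Rightarrow> 'r set \<Rightarrow> (real ^ 'd) set" where
  "cone_of b S = {(\<Sum>\<rho>\<in>S. c \<rho> *\<^sub>R rvec (b \<rho>)) | c. \<forall>\<rho>\<in>S. 0 \<le> c \<rho>}"

text \<open>Complete simplicial fan: cones are cone_of b S for S in Sig; the rays (1-dim cones)
  are exactly the cone_of b {rho}.\<close>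
definition complete_simplicial_fan :: "('r::finite \<Rightarrow> int ^ ('d::finite)) \<Rightarrow> 'r set set \<Rightarrow> bool" where
  "complete_simplicial_fan b Sig \<longleftrightarrow>
     (\<forall>\<rho>. b \<rho> \<noteq> 0) \<and>
     (\<forall>\<rho>. {\<rho>} \<in> Sig) \<and>
     (\<forall>S\<in>Sig. \<forall>T. T \<subseteq> S \<longrightarrow> T \<in> Sig) \<and>
     (\<forall>S\<in>Sig. \<forall>c. (\<Sum>\<rho>\<in>S. c \<rho> *\<^sub>R rvec (b \<rho>)) = 0 \<longrightarrow> (\<forall>\<rho>\<in>S. c \<rho> = 0)) \<and>
     (\<forall>S\<in>Sig. \<forall>T\<in>Sig. cone_of b S \<inter> cone_of b T = cone_of b (S \<inter> T)) \<and>
     (\<Union>S\<in>Sig. cone_of b S) = UNIV"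

definition acoef :: "('r::finite \<Rightarrow> int ^ ('d::finite)) \<Rightarrow> 'r set set \<Rightarrow> real ^ 'd \<Rightarrow> 'r \<Rightarrow> real" where
  "acoef b Sig y = (THE c. \<exists>S\<in>Sig. (\<forall>\<rho>. \<rho> \<notin> S \<longrightarrow> c \<rho> = 0) \<and> (\<forall>\<rho>\<in>S. 0 \<le> c \<rho>)
                          \<and> y = (\<Sum>\<rho>\<in>S. c \<rho> *\<^sub>R rvec (b \<rho>)))"

definition aN :: "('r::finite \<Rightarrow> int ^ ('d::finite)) \<Rightarrow> 'r set set \<Rightarrow> 'd Nel \<Rightarrow> 'r \<Rightarrow> real" where
  "aN b Sig n = acoef b Sig (rvec (fst n))"

text \<open>q(n) = (sum_rho {a_rho(y)} b_rho, g), written as y - sum_rho floor(a_rho(y)) b_rho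
  (equal, and visibly integral).\<close>
definition qN :: "('r::finite \<Rightarrow> int ^ ('d::finite)) \<Rightarrow> 'r set set \<Rightarrow> 'd Nel \<Rightarrow> 'd Nel" where
  "qN b Sig n = (fst n - (\<chi> j. \<Sum>\<rho>\<in>UNIV. \<lfloor>aN b Sig n \<rho>\<rfloor> * (b \<rho> $ j)), snd n)"

definition pi0star :: "nat list \<Rightarrow> ('r::finite \<Rightarrow> int ^ ('d::finite)) \<Rightarrow> 'r set set \<Rightarrow> 'd Nel set" where
  "pi0star ns b Sig = qN b Sig ` Nset ns - {zeroN}"

text \<open>s in C^I is given by sr (on Sigma(1)) and sY (on pi_0^*; values elsewhere irrelevant).\<close>
definition phiN :: "('r::finite \<Rightarrow> int ^ ('d::finite)) \<Rightarrow> 'r set set \<Rightarrow> ('r \<Rightarrow> complex)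
    \<Rightarrow> ('d Nel \<Rightarrow> complex) \<Rightarrow> 'd Nel \<Rightarrow> complex" where
  "phiN b Sig sr sY n =
     (if qN b Sig n \<noteq> zeroN then sY (qN b Sig n) + (\<Sum>\<rho>\<in>UNIV. of_real (aN b Sig n \<rho>) * sr \<rho>)
      else (\<Sum>\<rho>\<in>UNIV. of_real (aN b Sig n \<rho>) * sr \<rho>))"

definition XiY :: "('r::finite \<Rightarrow> int ^ ('d::finite)) \<Rightarrow> 'r set set \<Rightarrow> ('r \<Rightarrow> complex)
    \<Rightarrow> ('d Nel \<Rightarrow> complex) \<Rightarrow> 'd Nel \<Rightarrow> complex" where
  "XiY b Sig sr sY Y = sY Y + (\<Sum>\<rho>\<in>UNIV. of_real (aN b Sig Y \<rho>) * sr \<rho>)"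

text \<open>R_sigma and R_Sigma evaluated at X = (Xr on Sigma(1), XY on pi_0^*).\<close>
definition R_sigma :: "nat list \<Rightarrow> ('r::finite \<Rightarrow> int ^ ('d::finite)) \<Rightarrow> 'r set set \<Rightarrow> 'r set
    \<Rightarrow> ('r \<Rightarrow> complex) \<Rightarrow> ('d Nel \<Rightarrow> complex) \<Rightarrow> complex" where
  "R_sigma ns b Sig S Xr XY =
     ((\<Prod>\<rho>\<in>S. Xr \<rho>) +
      (\<Sum>Y\<in>{Y \<in> pi0star ns b Sig. rvec (fst Y) \<in> cone_of b S}.
          XY Y * (\<Prod>\<rho>\<in>{\<rho>\<in>S. aN b Sig Y \<rho> = 0}. Xr \<rho>)))
     / (\<Prod>\<rho>\<in>S. (1 - Xr \<rho>))"

definition R_Sigma :: "nat list \<Rightarrow> ('r::finite \<Rightarrow> int ^ ('d::finite)) \<Rightarrow> 'r set set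
    \<Rightarrow> ('r \<Rightarrow> complex) \<Rightarrow> ('d Nel \<Rightarrow> complex) \<Rightarrow> complex" where
  "R_Sigma ns b Sig Xr XY = (\<Sum>S\<in>Sig. R_sigma ns b Sig S Xr XY)"

definition Hv :: "nat \<Rightarrow> ('r::finite \<Rightarrow> int ^ ('d::finite)) \<Rightarrow> 'r set set \<Rightarrow> ('r \<Rightarrow> complex)
    \<Rightarrow> ('d Nel \<Rightarrow> complex) \<Rightarrow> ('a \<Rightarrow> 'd Nel) \<Rightarrow> 'a \<Rightarrow> complex" where
  "Hv q b Sig sr sY lg x = (of_nat q :: complex) powr (phiN b Sig sr sY (lg x))"

end

theory Submission
  imports Defs
begin


lemma prod_PiE_summable_nonneg:
  fixes f :: "'i \<Rightarrow> 'b \<Rightarrow> real"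
  assumes "finite A" "\<And>x. x \<in> A \<Longrightarrow> f x summable_on B x"
    "\<And>x y. x \<in> A \<Longrightarrow> y \<in> B x \<Longrightarrow> 0 \<le> f x y"
  shows "(\<lambda>g. \<Prod>x\<in>A. f x (g x)) summable_on (PiE A B)"
  using assms
proof (induction A rule: finite_induct)
  case empty
  then show ?case by (simp add: summable_on_finite)
next
  case (insert x A)
  have pi: "Pi\<^sub>E (insert x A) B = (\<lambda>(g,y). g(x:=y)) ` (Pi\<^sub>E A B \<times> B x)"
    unfolding PiE_insert_eq
    by (subst swap_product [symmetric]) (simp add: image_image case_prod_unfold)
  have inj: "inj_on (\<lambda>(g, y). g(x := y)) (Pi\<^sub>E A B \<times> B x)"
    using \<open>x \<notin> A\<close> by (rule inj_combinator')
  have IH: "(\<lambda>g. \<Prod>x\<in>A. f x (g x)) summable_on (PiE A B)"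
    using insert by auto
  have eq: "((\<lambda>g. \<Prod>x\<in>insert x A. f x (g x)) \<circ> (\<lambda>(g,y). g(x:=y))) =
             (\<lambda>(p, y). f x y * (\<Prod>x'\<in>A. f x' (p x')))"
  proof -
    have "(\<Prod>z\<in>A. f z ((g(x := y)) z)) = (\<Prod>z\<in>A. f z (g z))" for g y
      using insert.hyps by (intro prod.cong) auto
    then show ?thesis using insert.hyps by (auto simp: fun_eq_iff)
  qed
  have "(\<lambda>(p, y). f x y * (\<Prod>x'\<in>A. f x' (p x'))) summable_on (Pi\<^sub>E A B \<times> B x)"
  proof (rule summable_on_SigmaI[where g = "\<lambda>p. (\<Prod>x'\<in>A. f x' (p x')) * infsum (f x) (B x)"])
    show "((\<lambda>y. case (p, y) of (p, y) \<Rightarrow> f x y * (\<Prod>x'\<in>A. f x' (p x'))) has_sum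
          (\<Prod>x'\<in>A. f x' (p x')) * infsum (f x) (B x)) (B x)" if "p \<in> Pi\<^sub>E A B" for p
      using has_sum_cmult_right[OF has_sum_infsum[OF insert.prems(1)[of x]], of "\<Prod>x'\<in>A. f x' (p x')"]
      by (simp add: mult.commute)
    show "(\<lambda>p. (\<Prod>x'\<in>A. f x' (p x')) * infsum (f x) (B x)) summable_on Pi\<^sub>E A B"
      using IH by (rule summable_on_cmult_left)
    show "0 \<le> (case (p, y) of (p, y) \<Rightarrow> f x y * (\<Prod>x'\<in>A. f x' (p x')))"
      if "p \<in> Pi\<^sub>E A B" "y \<in> B x" for p y
      using that insert.prems(2) by (auto intro!: mult_nonneg_nonneg prod_nonneg simp: PiE_def Pi_def)
  qed
  then have "((\<lambda>g. \<Prod>x\<in>insert x A. f x (g x)) \<circ> (\<lambda>(g,y). g(x:=y))) summable_on (Pi\<^sub>E A B \<times> B x)"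
    by (simp only: eq)
  then show ?case
    using inj by (subst pi, subst summable_on_reindex) auto
qed


lemma has_sum_geometric_UNIV:
  fixes z :: "'a :: {real_normed_field, banach}"
  assumes "norm z < 1"
  shows   "((\<lambda>n. z ^ n) has_sum (1 / (1 - z))) UNIV"
proof -
  have "(\<lambda>n. z ^ n) sums (1 / (1 - z))"
    using geometric_sums[of z] assms by simp
  moreover have "summable (\<lambda>n. norm (z ^ n))"
    using assms by (auto simp: norm_power intro!: summable_geometric)
  ultimately show ?thesis
    by (intro norm_summable_imp_has_sum)
qed

lemma has_sum_geo_factor:
  fixes z :: "'a :: {real_normed_field, banach}"
  assumes "norm z < 1"
  shows "((\<lambda>n. z ^ n) has_sum (if P then z / (1 - z) else 1 / (1 - z))) (if P then {1..} else UNIV)"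
  using has_sum_geometric_UNIV[OF assms] has_sum_geometric_from_1[OF assms] by auto

lemma geo_K:
  fixes X :: "'i \<Rightarrow> 'a::{real_normed_field,banach}"
  assumes fin: "finite S" and lt: "\<forall>\<rho>\<in>S. norm (X \<rho>) < 1"
  shows "((\<lambda>k. \<Prod>\<rho>\<in>S. X \<rho> ^ k \<rho>) has_sum
          (\<Prod>\<rho>\<in>S. if P \<rho> then X \<rho> / (1 - X \<rho>) else 1 / (1 - X \<rho>)))
          {k::'i\<Rightarrow>nat. (\<forall>\<rho>. \<rho> \<notin> S \<longrightarrow> k \<rho> = 0) \<and> (\<forall>\<rho>\<in>S. P \<rho> \<longrightarrow> 1 \<le> k \<rho>)}"
proof -
  define D where "D \<rho> = (if P \<rho> then {1..} else (UNIV::nat set))" for \<rho>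
  define G where "G \<rho> = (if P \<rho> then X \<rho> / (1 - X \<rho>) else 1 / (1 - X \<rho>))" for \<rho>
  have fac: "((\<lambda>n. X \<rho> ^ n) has_sum G \<rho>) (D \<rho>)" if "\<rho> \<in> S" for \<rho>
    unfolding D_def G_def using has_sum_geo_factor[of "X \<rho>" "P \<rho>"] lt that by auto
  have facn: "((\<lambda>n. norm (X \<rho> ^ n)) has_sum (if P \<rho> then norm (X \<rho>) / (1 - norm (X \<rho>)) else 1 / (1 - norm (X \<rho>)))) (D \<rho>)"
    if "\<rho> \<in> S" for \<rho>
    unfolding D_def norm_power using has_sum_geo_factor[of "norm (X \<rho>)" "P \<rho>"] lt that by auto
  have abs_fac: "(\<lambda>n. X \<rho> ^ n) abs_summable_on D \<rho>" if "\<rho> \<in> S" for \<rho>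
    using facn[OF that] by (auto simp: summable_on_def)
  have "(\<lambda>g. \<Prod>\<rho>\<in>S. norm (X \<rho> ^ g \<rho>)) summable_on (PiE S D)"
    by (rule prod_PiE_summable_nonneg[OF fin]) (use abs_fac in auto)
  hence absP: "(\<lambda>g. \<Prod>\<rho>\<in>S. X \<rho> ^ g \<rho>) abs_summable_on (PiE S D)"
    by (simp add: prod_norm)
  hence "(\<lambda>g. \<Prod>\<rho>\<in>S. X \<rho> ^ g \<rho>) summable_on (PiE S D)"
    by (rule abs_summable_summable)
  moreover have "infsum (\<lambda>g. \<Prod>\<rho>\<in>S. X \<rho> ^ g \<rho>) (PiE S D) = (\<Prod>\<rho>\<in>S. infsum (\<lambda>n. X \<rho> ^ n) (D \<rho>))"
    by (rule infsum_prod_PiE_abs[OF fin abs_fac])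
  moreover have "(\<Prod>\<rho>\<in>S. infsum (\<lambda>n. X \<rho> ^ n) (D \<rho>)) = (\<Prod>\<rho>\<in>S. G \<rho>)"
    using fac by (intro prod.cong refl) (auto intro: infsumI)
  ultimately have hs: "((\<lambda>g. \<Prod>\<rho>\<in>S. X \<rho> ^ g \<rho>) has_sum (\<Prod>\<rho>\<in>S. G \<rho>)) (PiE S D)"
    by (metis has_sum_infsum)
  show ?thesis
    unfolding G_def[symmetric]
  proof (subst has_sum_reindex_bij_witness[where j = "\<lambda>k. restrict k S" and i = "\<lambda>g \<rho>. if \<rho> \<in> S then g \<rho> else 0"
        and T = "PiE S D" and h = "\<lambda>g. \<Prod>\<rho>\<in>S. X \<rho> ^ g \<rho>" and s' = "\<Prod>\<rho>\<in>S. G \<rho>"])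
    show "((\<lambda>g. \<Prod>\<rho>\<in>S. X \<rho> ^ g \<rho>) has_sum (\<Prod>\<rho>\<in>S. G \<rho>)) (PiE S D)" by (rule hs)
  qed (auto simp: fun_eq_iff D_def PiE_def extensional_def split: if_splits intro!: prod.cong)
qed


definition lc :: "('r::finite \<Rightarrow> int ^ ('d::finite)) \<Rightarrow> ('r \<Rightarrow> int) \<Rightarrow> int ^ 'd" where
  "lc b k = (\<chi> j. \<Sum>\<rho>\<in>UNIV. k \<rho> * (b \<rho> $ j))"

lemma rvec_add: "rvec (x + y) = rvec x + rvec y"
  by (simp add: rvec_def vec_eq_iff)
lemma rvec_diff: "rvec (x - y) = rvec x - rvec y"
  by (simp add: rvec_def vec_eq_iff)
lemma rvec_zero[simp]: "rvec 0 = 0"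
  by (simp add: rvec_def vec_eq_iff)
lemma rvec_lc: "rvec (lc b k) = (\<Sum>\<rho>\<in>UNIV. real_of_int (k \<rho>) *\<^sub>R rvec (b \<rho>))"
proof (rule vec_eq_iff[THEN iffD2], rule allI)
  fix j
  have "rvec (lc b k) $ j = (\<Sum>\<rho>\<in>UNIV. real_of_int (k \<rho>) * real_of_int (b \<rho> $ j))"
    unfolding rvec_def lc_def by simp
  also have "\<dots> = (\<Sum>\<rho>\<in>UNIV. real_of_int (k \<rho>) *\<^sub>R rvec (b \<rho>)) $ j"
    unfolding sum_component by (simp add: rvec_def)
  finally show "rvec (lc b k) $ j = (\<Sum>\<rho>\<in>UNIV. real_of_int (k \<rho>) *\<^sub>R rvec (b \<rho>)) $ j" .
qed

lemma fan_inter: assumes fan: "complete_simplicial_fan b Sig" and S: "S \<in> Sig" and T: "T \<in> Sig"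
  shows "cone_of b S \<inter> cone_of b T = cone_of b (S \<inter> T)"
proof -
  have H: "\<forall>S\<in>Sig. \<forall>T\<in>Sig. cone_of b S \<inter> cone_of b T = cone_of b (S \<inter> T)"
    using fan unfolding complete_simplicial_fan_def by (elim conjE) assumption
  show ?thesis by (rule bspec[OF bspec[OF H S] T])
qed
lemma fan_indep: "complete_simplicial_fan b Sig \<Longrightarrow> S \<in> Sig \<Longrightarrow>
   (\<Sum>\<rho>\<in>S. c \<rho> *\<^sub>R rvec (b \<rho>)) = 0 \<Longrightarrow> \<rho> \<in> S \<Longrightarrow> c \<rho> = 0"
  unfolding complete_simplicial_fan_def by (elim conjE) (drule bspec, assumption, blast)
lemma fan_cover: "complete_simplicial_fan b Sig \<Longrightarrow> (\<Union>S\<in>Sig. cone_of b S) = UNIV"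
  unfolding complete_simplicial_fan_def by (elim conjE) assumption
lemma fan_down: "complete_simplicial_fan b Sig \<Longrightarrow> S \<in> Sig \<Longrightarrow> T \<subseteq> S \<Longrightarrow> T \<in> Sig"
  unfolding complete_simplicial_fan_def by (elim conjE) blast
lemma fan_single: "complete_simplicial_fan b Sig \<Longrightarrow> {\<rho>} \<in> Sig"
  unfolding complete_simplicial_fan_def by (elim conjE) blast

lemma sum_UNIV_outside:
  fixes c :: "'r::finite \<Rightarrow> 'b::comm_monoid_add"
  assumes "\<forall>\<rho>. \<rho> \<notin> S \<longrightarrow> c \<rho> = 0"
  shows "(\<Sum>\<rho>\<in>UNIV. c \<rho>) = (\<Sum>\<rho>\<in>S. c \<rho>)"
  using assms by (intro sum.mono_neutral_right) auto


lemma rep_unique: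
  assumes fan: "complete_simplicial_fan b Sig" and S: "S \<in> Sig" and T: "T \<in> Sig"
    and c0: "\<forall>\<rho>. \<rho> \<notin> S \<longrightarrow> c \<rho> = 0" and cnn: "\<forall>\<rho>. 0 \<le> c \<rho>"
    and d0: "\<forall>\<rho>. \<rho> \<notin> T \<longrightarrow> d \<rho> = 0" and dnn: "\<forall>\<rho>. 0 \<le> d \<rho>"
    and eq: "(\<Sum>\<rho>\<in>UNIV. c \<rho> *\<^sub>R rvec (b \<rho>)) = (\<Sum>\<rho>\<in>UNIV. d \<rho> *\<^sub>R rvec (b \<rho>))"
  shows "c = d"
proof -
  define y where "y = (\<Sum>\<rho>\<in>UNIV. c \<rho> *\<^sub>R rvec (b \<rho>))"
  have yS: "y = (\<Sum>\<rho>\<in>S. c \<rho> *\<^sub>R rvec (b \<rho>))"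
    unfolding y_def by (rule sum_UNIV_outside) (use c0 in auto)
  have yT: "y = (\<Sum>\<rho>\<in>T. d \<rho> *\<^sub>R rvec (b \<rho>))"
    unfolding y_def eq by (rule sum_UNIV_outside) (use d0 in auto)
  have "y \<in> cone_of b S" unfolding cone_of_def using yS cnn by blast
  moreover have "y \<in> cone_of b T" unfolding cone_of_def using yT dnn by blast
  ultimately have "y \<in> cone_of b (S \<inter> T)"
    using fan_inter[OF fan S T] by blast
  then obtain e where e: "\<forall>\<rho>\<in>S \<inter> T. 0 \<le> e \<rho>" "y = (\<Sum>\<rho>\<in>S \<inter> T. e \<rho> *\<^sub>R rvec (b \<rho>))"
    unfolding cone_of_def by blast
  define e' where "e' \<rho> = (if \<rho> \<in> S \<inter> T then e \<rho> else 0)" for \<rho>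
  have ye': "y = (\<Sum>\<rho>\<in>UNIV. e' \<rho> *\<^sub>R rvec (b \<rho>))"
    unfolding e(2) e'_def by (subst sum_UNIV_outside[where S = "S \<inter> T"]) (auto intro!: sum.cong)
  have key: "c' = e'" if Sc: "S' \<in> Sig" and "\<forall>\<rho>. \<rho> \<notin> S' \<longrightarrow> c' \<rho> = 0"
    and "y = (\<Sum>\<rho>\<in>UNIV. c' \<rho> *\<^sub>R rvec (b \<rho>))" and "S \<inter> T \<subseteq> S'" for S' c'
  proof -
    have "(\<Sum>\<rho>\<in>S'. (c' \<rho> - e' \<rho>) *\<^sub>R rvec (b \<rho>)) = (\<Sum>\<rho>\<in>UNIV. (c' \<rho> - e' \<rho>) *\<^sub>R rvec (b \<rho>))"
      by (rule sum_UNIV_outside[symmetric]) (use that in \<open>auto simp: e'_def\<close>)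
    also have "\<dots> = 0"
      using that ye' by (simp add: scaleR_diff_left sum_subtractf)
    finally have Z: "(\<Sum>\<rho>\<in>S'. (c' \<rho> - e' \<rho>) *\<^sub>R rvec (b \<rho>)) = 0" .
    have "\<forall>\<rho>\<in>S'. c' \<rho> - e' \<rho> = 0"
    proof
      fix \<rho> assume "\<rho> \<in> S'"
      then show "c' \<rho> - e' \<rho> = 0"
        using fan_indep[OF fan Sc, where c="\<lambda>\<rho>. c' \<rho> - e' \<rho>", OF Z] by simp
    qed
    show ?thesis
    proof
      fix \<rho> show "c' \<rho> = e' \<rho>"
      proof (cases "\<rho> \<in> S'")
        case True then show ?thesis using \<open>\<forall>\<rho>\<in>S'. c' \<rho> - e' \<rho> = 0\<close> by auto
      next
        case False then show ?thesis using that(2,4) by (auto simp: e'_def)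
      qed
    qed
  qed
  have "c = e'" by (rule key[OF S c0]) (auto simp: y_def)
  moreover have "d = e'" by (rule key[OF T d0]) (auto simp: y_def eq)
  ultimately show ?thesis by simp
qed


lemma acoef_eqI:
  assumes fan: "complete_simplicial_fan b Sig" and S: "S \<in> Sig"
    and c0: "\<forall>\<rho>. \<rho> \<notin> S \<longrightarrow> c \<rho> = 0" and cnn: "\<forall>\<rho>. 0 \<le> c \<rho>"
    and y: "y = (\<Sum>\<rho>\<in>UNIV. c \<rho> *\<^sub>R rvec (b \<rho>))"
  shows "acoef b Sig y = c"
  unfolding acoef_def
proof (rule the_equality)
  show "\<exists>S\<in>Sig. (\<forall>\<rho>. \<rho> \<notin> S \<longrightarrow> c \<rho> = 0) \<and> (\<forall>\<rho>\<in>S. 0 \<le> c \<rho>) \<and> y = (\<Sum>\<rho>\<in>S. c \<rho> *\<^sub>R rvec (b \<rho>))"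
  proof -
    have yS: "y = (\<Sum>\<rho>\<in>S. c \<rho> *\<^sub>R rvec (b \<rho>))"
      unfolding y by (rule sum_UNIV_outside) (use c0 in auto)
    show ?thesis
      apply (rule bexI[OF _ S])
      using c0 cnn yS by simp
  qed
next
  fix c' assume "\<exists>T\<in>Sig. (\<forall>\<rho>. \<rho> \<notin> T \<longrightarrow> c' \<rho> = 0) \<and> (\<forall>\<rho>\<in>T. 0 \<le> c' \<rho>) \<and> y = (\<Sum>\<rho>\<in>T. c' \<rho> *\<^sub>R rvec (b \<rho>))"
  then obtain T where T: "T \<in> Sig" "\<forall>\<rho>. \<rho> \<notin> T \<longrightarrow> c' \<rho> = 0" "\<forall>\<rho>\<in>T. 0 \<le> c' \<rho>"
    "y = (\<Sum>\<rho>\<in>T. c' \<rho> *\<^sub>R rvec (b \<rho>))" by blast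
  have yT: "(\<Sum>\<rho>\<in>UNIV. c' \<rho> *\<^sub>R rvec (b \<rho>)) = y"
    unfolding T(4) by (rule sum_UNIV_outside) (use T(2) in auto)
  have nn: "\<forall>\<rho>. 0 \<le> c' \<rho>"
  proof
    fix \<rho> show "0 \<le> c' \<rho>" using T(2,3) by (cases "\<rho> \<in> T") auto
  qed
  have eq: "(\<Sum>\<rho>\<in>UNIV. c' \<rho> *\<^sub>R rvec (b \<rho>)) = (\<Sum>\<rho>\<in>UNIV. c \<rho> *\<^sub>R rvec (b \<rho>))"
    using yT y by (rule trans)
  show "c' = c"
    by (rule rep_unique[OF fan T(1) S T(2) nn c0 cnn eq])
qed

lemma acoef_props:
  assumes fan: "complete_simplicial_fan b Sig"
  shows "\<exists>S\<in>Sig. (\<forall>\<rho>. \<rho> \<notin> S \<longrightarrow> acoef b Sig y \<rho> = 0) \<and> (\<forall>\<rho>. 0 \<le> acoef b Sig y \<rho>)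
           \<and> y = (\<Sum>\<rho>\<in>UNIV. acoef b Sig y \<rho> *\<^sub>R rvec (b \<rho>))"
proof -
  have "y \<in> (\<Union>S\<in>Sig. cone_of b S)" using fan_cover[OF fan] by simp
  then obtain S where S1: "S \<in> Sig" and "y \<in> cone_of b S" by (rule UN_E)
  then obtain c where S2: "\<forall>\<rho>\<in>S. 0 \<le> c \<rho>" and S3: "y = (\<Sum>\<rho>\<in>S. c \<rho> *\<^sub>R rvec (b \<rho>))"
    unfolding cone_of_def by (auto simp only: mem_Collect_eq)
  define c' where "c' \<rho> = (if \<rho> \<in> S then c \<rho> else 0)" for \<rho>
  have c'0: "\<forall>\<rho>. \<rho> \<notin> S \<longrightarrow> c' \<rho> = 0" by (simp add: c'_def)
  have c'nn: "\<forall>\<rho>. 0 \<le> c' \<rho>" using S2 by (simp add: c'_def)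
  have "(\<Sum>\<rho>\<in>UNIV. c' \<rho> *\<^sub>R rvec (b \<rho>)) = (\<Sum>\<rho>\<in>S. c' \<rho> *\<^sub>R rvec (b \<rho>))"
    by (rule sum_UNIV_outside) (use c'0 in simp)
  also have "\<dots> = (\<Sum>\<rho>\<in>S. c \<rho> *\<^sub>R rvec (b \<rho>))"
    by (rule sum.cong) (simp_all add: c'_def)
  finally have y': "y = (\<Sum>\<rho>\<in>UNIV. c' \<rho> *\<^sub>R rvec (b \<rho>))" using S3 by (rule ssubst)
  have ac: "acoef b Sig y = c'"
    by (rule acoef_eqI[OF fan S1 c'0 c'nn y'])
  show ?thesis
    apply (rule bexI[OF _ S1])
    unfolding ac using c'0 c'nn y' by (intro conjI)
qed

lemma aN_props:
  assumes fan: "complete_simplicial_fan b Sig"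
  shows "(\<forall>\<rho>. 0 \<le> aN b Sig n \<rho>) \<and> {\<rho>. 0 < aN b Sig n \<rho>} \<in> Sig
           \<and> rvec (fst n) = (\<Sum>\<rho>\<in>UNIV. aN b Sig n \<rho> *\<^sub>R rvec (b \<rho>))"
proof -
  obtain S where S: "S \<in> Sig" "\<forall>\<rho>. \<rho> \<notin> S \<longrightarrow> aN b Sig n \<rho> = 0" "\<forall>\<rho>. 0 \<le> aN b Sig n \<rho>"
    "rvec (fst n) = (\<Sum>\<rho>\<in>UNIV. aN b Sig n \<rho> *\<^sub>R rvec (b \<rho>))"
    using acoef_props[OF fan, of "rvec (fst n)"] unfolding aN_def by blast
  have "{\<rho>. 0 < aN b Sig n \<rho>} \<subseteq> S" using S(2) by force
  then have "{\<rho>. 0 < aN b Sig n \<rho>} \<in> Sig" by (rule fan_down[OF fan S(1)])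
  then show ?thesis using S(3,4) by (intro conjI)
qed


lemma empty_in_Sig: assumes fan: "complete_simplicial_fan b Sig" shows "{} \<in> Sig"
  by (rule fan_down[OF fan fan_single[OF fan]]) simp

lemma aN_zero: assumes fan: "complete_simplicial_fan b Sig"
  shows "aN b Sig zeroN = (\<lambda>\<rho>. 0)"
  unfolding aN_def zeroN_def
  by (rule acoef_eqI[OF fan empty_in_Sig[OF fan]]) simp_all

lemma qN_lc: "qN b Sig n = (fst n - lc b (\<lambda>\<rho>. \<lfloor>aN b Sig n \<rho>\<rfloor>), snd n)"
  unfolding qN_def lc_def ..

lemma snd_qN[simp]: "snd (qN b Sig n) = snd n"
  unfolding qN_def by simp

lemma rvec_fst_qN:
  assumes fan: "complete_simplicial_fan b Sig"
  shows "rvec (fst (qN b Sig n)) = (\<Sum>\<rho>\<in>UNIV. frac (aN b Sig n \<rho>) *\<^sub>R rvec (b \<rho>))"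
proof -
  have "rvec (fst (qN b Sig n)) = rvec (fst n) - (\<Sum>\<rho>\<in>UNIV. real_of_int \<lfloor>aN b Sig n \<rho>\<rfloor> *\<^sub>R rvec (b \<rho>))"
    unfolding qN_lc by (simp add: rvec_diff rvec_lc)
  also have "rvec (fst n) = (\<Sum>\<rho>\<in>UNIV. aN b Sig n \<rho> *\<^sub>R rvec (b \<rho>))"
    using aN_props[OF fan] by blast
  finally show ?thesis
    by (simp add: frac_def scaleR_diff_left sum_subtractf)
qed

lemma aN_qN:
  assumes fan: "complete_simplicial_fan b Sig"
  shows "aN b Sig (qN b Sig n) = (\<lambda>\<rho>. frac (aN b Sig n \<rho>))"
proof -
  have P: "\<forall>\<rho>. 0 \<le> aN b Sig n \<rho>" "{\<rho>. 0 < aN b Sig n \<rho>} \<in> Sig"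
    using aN_props[OF fan] by blast+
  show ?thesis
    unfolding aN_def[of b Sig "qN b Sig n"]
  proof (rule acoef_eqI[OF fan P(2)])
    show "\<forall>\<rho>. \<rho> \<notin> {\<rho>. 0 < aN b Sig n \<rho>} \<longrightarrow> frac (aN b Sig n \<rho>) = 0"
    proof (intro allI impI)
      fix \<rho> assume "\<rho> \<notin> {\<rho>. 0 < aN b Sig n \<rho>}"
      then have "aN b Sig n \<rho> = 0" using P(1)[rule_format, of \<rho>] by simp
      then show "frac (aN b Sig n \<rho>) = 0" by simp
    qed
    show "\<forall>\<rho>. 0 \<le> frac (aN b Sig n \<rho>)" by (simp add: frac_ge_0)
    show "rvec (fst (qN b Sig n)) = (\<Sum>\<rho>\<in>UNIV. frac (aN b Sig n \<rho>) *\<^sub>R rvec (b \<rho>))"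
      by (rule rvec_fst_qN[OF fan])
  qed
qed

definition Gset :: "nat list \<Rightarrow> (nat \<Rightarrow> int) set" where
  "Gset ns = {g. \<forall>i. (i < length ns \<longrightarrow> 0 \<le> g i \<and> g i < int (ns ! i)) \<and> (length ns \<le> i \<longrightarrow> g i = 0)}"

lemma Nset_eq: "Nset ns = UNIV \<times> Gset ns"
  unfolding Nset_def Gset_def by auto

lemma finite_Gset: "finite (Gset ns)"
proof -
  have "Gset ns \<subseteq> (\<lambda>f i. if i < length ns then f i else 0) ` PiE {..<length ns} (\<lambda>i. {0..<int (ns ! i)})"
  proof
    fix g assume g: "g \<in> Gset ns"
    have "g = (\<lambda>i. if i < length ns then restrict g {..<length ns} i else 0)"
      using g by (auto simp: Gset_def fun_eq_iff)
    moreover have "restrict g {..<length ns} \<in> PiE {..<length ns} (\<lambda>i. {0..<int (ns ! i)})"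
      using g by (auto simp: Gset_def)
    ultimately show "g \<in> (\<lambda>f i. if i < length ns then f i else 0) ` PiE {..<length ns} (\<lambda>i. {0..<int (ns ! i)})"
      by blast
  qed
  moreover have "finite (PiE {..<length ns} (\<lambda>i. {0..<int (ns ! i)}))"
    by (rule finite_PiE) auto
  ultimately show ?thesis by (meson finite_imageI finite_subset)
qed

lemma finite_bounded_vec: "finite {v :: int ^ ('d::finite). \<forall>j. \<bar>v $ j\<bar> \<le> C}"
proof -
  have "{v :: int ^ 'd. \<forall>j. \<bar>v $ j\<bar> \<le> C} \<subseteq> vec_lambda ` PiE UNIV (\<lambda>_. {-C..C})"
  proof
    fix v :: "int ^ 'd" assume v: "v \<in> {v. \<forall>j. \<bar>v $ j\<bar> \<le> C}"
    have "-C \<le> v $ j \<and> v $ j \<le> C" for j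
    proof -
      have "\<bar>v $ j\<bar> \<le> C" using v by simp
      then show ?thesis by linarith
    qed
    then have "vec_nth v \<in> PiE UNIV (\<lambda>_. {-C..C})" by (auto simp: PiE_iff)
    then show "v \<in> vec_lambda ` PiE UNIV (\<lambda>_. {-C..C})"
      by (metis image_eqI vec_nth_inverse)
  qed
  moreover have "finite (PiE (UNIV::'d set) (\<lambda>_. {-C..C}))" by (rule finite_PiE) auto
  ultimately show ?thesis by (meson finite_imageI finite_subset)
qed

lemma finite_qN_image:
  assumes fan: "complete_simplicial_fan b Sig"
  shows "finite (qN b Sig ` Nset ns)"
proof -
  define C where "C = (\<Sum>\<rho>\<in>UNIV. \<Sum>j\<in>UNIV. \<bar>b \<rho> $ j\<bar>)"
  have bound: "\<bar>fst (qN b Sig n) $ j\<bar> \<le> C" for n j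
  proof -
    have "real_of_int (fst (qN b Sig n) $ j) = rvec (fst (qN b Sig n)) $ j"
      by (simp add: rvec_def)
    also have "\<dots> = (\<Sum>\<rho>\<in>UNIV. frac (aN b Sig n \<rho>) * real_of_int (b \<rho> $ j))"
      unfolding rvec_fst_qN[OF fan] sum_component by (simp add: rvec_def)
    finally have eq: "real_of_int (fst (qN b Sig n) $ j) = (\<Sum>\<rho>\<in>UNIV. frac (aN b Sig n \<rho>) * real_of_int (b \<rho> $ j))" .
    have "\<bar>\<Sum>\<rho>\<in>UNIV. frac (aN b Sig n \<rho>) * real_of_int (b \<rho> $ j)\<bar> \<le> (\<Sum>\<rho>\<in>UNIV. \<bar>frac (aN b Sig n \<rho>) * real_of_int (b \<rho> $ j)\<bar>)"
      by (rule sum_abs)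
    also have "\<dots> \<le> (\<Sum>\<rho>\<in>UNIV. real_of_int \<bar>b \<rho> $ j\<bar>)"
    proof (rule sum_mono)
      fix \<rho> :: 'a
      have "\<bar>frac (aN b Sig n \<rho>)\<bar> \<le> 1" using frac_lt_1 frac_ge_0 by (smt (verit))
      then show "\<bar>frac (aN b Sig n \<rho>) * real_of_int (b \<rho> $ j)\<bar> \<le> real_of_int \<bar>b \<rho> $ j\<bar>"
        by (simp add: abs_mult mult_left_le_one_le)
    qed
    also have "\<dots> \<le> real_of_int C"
    proof -
      have "(\<Sum>\<rho>\<in>UNIV. \<bar>b \<rho> $ j\<bar>) \<le> C"
        unfolding C_def by (intro sum_mono member_le_sum) auto
      then show ?thesis by (metis of_int_le_iff of_int_sum)
    qed
    finally show ?thesis using eq by (metis of_int_abs of_int_le_iff)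
  qed
  have "qN b Sig ` Nset ns \<subseteq> {v. \<forall>j. \<bar>v $ j\<bar> \<le> C} \<times> Gset ns"
  proof
    fix x assume "x \<in> qN b Sig ` Nset ns"
    then obtain n where n: "n \<in> Nset ns" "x = qN b Sig n" by blast
    have "fst x \<in> {v. \<forall>j. \<bar>v $ j\<bar> \<le> C}" using bound n(2) by simp
    moreover have "snd x \<in> Gset ns" using n by (auto simp: Nset_eq)
    ultimately show "x \<in> {v. \<forall>j. \<bar>v $ j\<bar> \<le> C} \<times> Gset ns" by (simp add: mem_Times_iff)
  qed
  moreover have "finite ({v :: int ^ 'b. \<forall>j. \<bar>v $ j\<bar> \<le> C} \<times> Gset ns)"
    using finite_bounded_vec finite_Gset by blast
  ultimately show ?thesis by (rule finite_subset)
qed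


lemma cpowr_sum:
  fixes x :: complex
  assumes "x \<noteq> 0" "finite S"
  shows "x powr (\<Sum>i\<in>S. f i) = (\<Prod>i\<in>S. x powr f i)"
  using assms(2) by induction (use assms(1) in \<open>auto simp: powr_add\<close>)

lemma cpowr_nat_mult:
  fixes x :: complex
  assumes "x \<noteq> 0"
  shows "x powr (of_nat k * z) = (x powr z) ^ k"
  using powr_power[OF assms, of z k] by simp

locale L =
  fixes ns :: "nat list" and b :: "'r::finite \<Rightarrow> int ^ ('d::finite)" and Sig :: "'r set set"
    and q :: nat and psi :: "'d Nel \<Rightarrow> complex" and sr :: "'r \<Rightarrow> complex" and sY :: "'d Nel \<Rightarrow> complex"
  assumes ns_pos: "\<forall>i < length ns. 0 < ns ! i"
    and fan: "complete_simplicial_fan b Sig"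
    and q_gt: "1 < q"
    and psi_unit: "\<forall>n\<in>Nset ns. norm (psi n) = 1"
    and psi_hom: "\<forall>n\<in>Nset ns. \<forall>m\<in>Nset ns. psi (addN ns n m) = psi n * psi m"
    and Re_s: "\<forall>\<rho>. 0 < Re (sr \<rho>)"
begin

definition pr :: "int ^ 'd \<Rightarrow> complex" where "pr v = psi (v, \<lambda>i. 0)"

lemma zero_tors_Nset: "(v, \<lambda>i. 0) \<in> Nset ns"
  using ns_pos by (auto simp: Nset_def)

lemma zeroN_Nset: "zeroN \<in> Nset ns"
  unfolding zeroN_def by (rule zero_tors_Nset)

lemma pr_add: "pr (u + v) = pr u * pr v"
proof -
  have "addN ns (u, \<lambda>i. 0) (v, \<lambda>i. 0) = (u + v, \<lambda>i. 0)"
    by (auto simp: addN_def fun_eq_iff)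
  then show ?thesis using psi_hom zero_tors_Nset unfolding pr_def by metis
qed

lemma pr_zero: "pr 0 = 1"
proof -
  have "pr 0 = pr 0 * pr 0" using pr_add[of 0 0] by simp
  moreover have "norm (pr 0) = 1" using psi_unit zero_tors_Nset unfolding pr_def by blast
  then have "pr 0 \<noteq> 0" by auto
  ultimately show ?thesis by (metis mult_cancel_left1)
qed

lemma psi_zeroN: "psi zeroN = 1"
  using pr_zero unfolding pr_def zeroN_def by simp

lemma pr_sum: "finite F \<Longrightarrow> pr (\<Sum>i\<in>F. f i) = (\<Prod>i\<in>F. pr (f i))"
  by (induction rule: finite_induct) (auto simp: pr_zero pr_add)

lemma pr_smult: "pr (\<chi> j. int k * (v $ j)) = pr v ^ k"
proof (induction k)
  case 0
  have "(\<chi> j. int 0 * (v $ j)) = 0" by (simp add: vec_eq_iff)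
  then show ?case by (simp add: pr_zero)
next
  case (Suc k)
  have "(\<chi> j. int (Suc k) * (v $ j)) = v + (\<chi> j. int k * (v $ j))"
    by (simp add: vec_eq_iff algebra_simps)
  then show ?case using Suc by (simp add: pr_add)
qed

lemma lc_sum: "lc b k = (\<Sum>\<rho>\<in>UNIV. (\<chi> j. k \<rho> * (b \<rho> $ j)))"
  by (simp add: lc_def vec_eq_iff sum_component)

lemma pr_lc: "pr (lc b (\<lambda>\<rho>. int (k \<rho>))) = (\<Prod>\<rho>\<in>UNIV. pr (b \<rho>) ^ k \<rho>)"
  unfolding lc_sum by (simp add: pr_sum pr_smult)

lemma norm_pr: "norm (pr v) = 1"
  using psi_unit zero_tors_Nset unfolding pr_def by blast

definition X :: "'r \<Rightarrow> complex" where
  "X \<rho> = (of_nat q :: complex) powr (- sr \<rho>) * cnj (psi (b \<rho>, (\<lambda>i. 0)))"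

lemma q_ne0: "(of_nat q :: complex) \<noteq> 0" using q_gt by simp

lemma norm_qpowr: "norm ((of_nat q :: complex) powr z) = real q powr Re z"
  by (subst norm_powr_real_powr) auto

lemma norm_X: "norm (X \<rho>) = real q powr (- Re (sr \<rho>))"
  using norm_pr[of "b \<rho>"] unfolding X_def pr_def by (simp add: norm_mult norm_qpowr)

lemma norm_X_lt1: "norm (X \<rho>) < 1"
  unfolding norm_X using q_gt Re_s by (intro powr_less_one) auto

end


lemma in_cone_aN:
  assumes fan: "complete_simplicial_fan b Sig" and S: "S \<in> Sig" and Y: "rvec (fst Y) \<in> cone_of b S"
  shows "\<forall>\<rho>. \<rho> \<notin> S \<longrightarrow> aN b Sig Y \<rho> = 0"
proof -
  obtain c where S2: "\<forall>\<rho>\<in>S. 0 \<le> c \<rho>" and S3: "rvec (fst Y) = (\<Sum>\<rho>\<in>S. c \<rho> *\<^sub>R rvec (b \<rho>))"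
    using Y unfolding cone_of_def by (auto simp only: mem_Collect_eq)
  define c' where "c' \<rho> = (if \<rho> \<in> S then c \<rho> else 0)" for \<rho>
  have c'0: "\<forall>\<rho>. \<rho> \<notin> S \<longrightarrow> c' \<rho> = 0" by (simp add: c'_def)
  have c'nn: "\<forall>\<rho>. 0 \<le> c' \<rho>" using S2 by (simp add: c'_def)
  have "(\<Sum>\<rho>\<in>UNIV. c' \<rho> *\<^sub>R rvec (b \<rho>)) = (\<Sum>\<rho>\<in>S. c' \<rho> *\<^sub>R rvec (b \<rho>))"
    by (rule sum_UNIV_outside) (use c'0 in simp)
  also have "\<dots> = (\<Sum>\<rho>\<in>S. c \<rho> *\<^sub>R rvec (b \<rho>))"
    by (rule sum.cong) (simp_all add: c'_def)
  finally have y': "rvec (fst Y) = (\<Sum>\<rho>\<in>UNIV. c' \<rho> *\<^sub>R rvec (b \<rho>))" using S3 by (rule ssubst)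
  have ac: "aN b Sig Y = c'"
    unfolding aN_def by (rule acoef_eqI[OF fan S c'0 c'nn y'])
  show ?thesis unfolding ac by (rule c'0)
qed

context L begin

definition Ys :: "'r set \<Rightarrow> 'd Nel set" where
  "Ys S = insert zeroN {Y \<in> pi0star ns b Sig. rvec (fst Y) \<in> cone_of b S}"

definition emb :: "'d Nel \<Rightarrow> ('r \<Rightarrow> nat) \<Rightarrow> 'd Nel" where
  "emb Y k = (fst Y + lc b (\<lambda>\<rho>. int (k \<rho>)), snd Y)"

definition Kset :: "'r set \<Rightarrow> 'd Nel \<Rightarrow> ('r \<Rightarrow> nat) set" where
  "Kset S Y = {k. (\<forall>\<rho>. \<rho> \<notin> S \<longrightarrow> k \<rho> = 0) \<and> (\<forall>\<rho>\<in>S. aN b Sig Y \<rho> = 0 \<longrightarrow> 1 \<le> k \<rho>)}"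

definition Bset :: "'r set \<Rightarrow> 'd Nel \<Rightarrow> 'd Nel set" where
  "Bset S Y = {n \<in> Nset ns. {\<rho>. 0 < aN b Sig n \<rho>} = S \<and> qN b Sig n = Y}"

lemma qN_Nset: "n \<in> Nset ns \<Longrightarrow> qN b Sig n \<in> Nset ns"
  by (auto simp: Nset_eq mem_Times_iff)

lemma Ys_props:
  assumes S: "S \<in> Sig" and Y: "Y \<in> Ys S"
  shows "Y \<in> Nset ns \<and> (\<forall>\<rho>. 0 \<le> aN b Sig Y \<rho> \<and> aN b Sig Y \<rho> < 1) \<and> (\<forall>\<rho>. \<rho> \<notin> S \<longrightarrow> aN b Sig Y \<rho> = 0)"
proof (cases "Y = zeroN")
  case True
  then show ?thesis using zeroN_Nset aN_zero[OF fan] by simp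
next
  case False
  then have Y1: "Y \<in> pi0star ns b Sig" and Y2: "rvec (fst Y) \<in> cone_of b S"
    using Y by (auto simp: Ys_def)
  then obtain m where m: "m \<in> Nset ns" "Y = qN b Sig m" by (auto simp: pi0star_def)
  have "Y \<in> Nset ns" using qN_Nset m by simp
  moreover have "\<forall>\<rho>. 0 \<le> aN b Sig Y \<rho> \<and> aN b Sig Y \<rho> < 1"
    unfolding m(2) aN_qN[OF fan] by (simp add: frac_ge_0 frac_lt_1)
  moreover have "\<forall>\<rho>. \<rho> \<notin> S \<longrightarrow> aN b Sig Y \<rho> = 0"
    by (rule in_cone_aN[OF fan S Y2])
  ultimately show ?thesis by blast
qed

lemma rvec_fst_aN: "rvec (fst n) = (\<Sum>\<rho>\<in>UNIV. aN b Sig n \<rho> *\<^sub>R rvec (b \<rho>))"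
  using aN_props[OF fan] by blast

lemma aN_nonneg: "0 \<le> aN b Sig n \<rho>"
  using aN_props[OF fan] by blast

lemma supp_Sig: "{\<rho>. 0 < aN b Sig n \<rho>} \<in> Sig"
  using aN_props[OF fan] by blast

lemma emb_aN:
  assumes S: "S \<in> Sig" and Y: "Y \<in> Ys S" and k: "k \<in> Kset S Y"
  shows "aN b Sig (emb Y k) = (\<lambda>\<rho>. aN b Sig Y \<rho> + real (k \<rho>))"
  unfolding aN_def[of b Sig "emb Y k"]
proof (rule acoef_eqI[OF fan S])
  have P: "Y \<in> Nset ns" "\<forall>\<rho>. 0 \<le> aN b Sig Y \<rho> \<and> aN b Sig Y \<rho> < 1" "\<forall>\<rho>. \<rho> \<notin> S \<longrightarrow> aN b Sig Y \<rho> = 0"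
    using Ys_props[OF S Y] by blast+
  show "\<forall>\<rho>. \<rho> \<notin> S \<longrightarrow> aN b Sig Y \<rho> + real (k \<rho>) = 0"
    using P(3) k by (simp add: Kset_def)
  show "\<forall>\<rho>. 0 \<le> aN b Sig Y \<rho> + real (k \<rho>)"
    using P(2) by (simp add: add_nonneg_nonneg)
  have "rvec (fst (emb Y k)) = rvec (fst Y) + (\<Sum>\<rho>\<in>UNIV. real (k \<rho>) *\<^sub>R rvec (b \<rho>))"
    unfolding emb_def by (simp add: rvec_add rvec_lc)
  also have "\<dots> = (\<Sum>\<rho>\<in>UNIV. (aN b Sig Y \<rho> + real (k \<rho>)) *\<^sub>R rvec (b \<rho>))"
    unfolding rvec_fst_aN[of Y] by (simp add: scaleR_add_left sum.distrib)
  finally show "rvec (fst (emb Y k)) = (\<Sum>\<rho>\<in>UNIV. (aN b Sig Y \<rho> + real (k \<rho>)) *\<^sub>R rvec (b \<rho>))" .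
qed

lemma floor_frac_plus:
  assumes "0 \<le> a" "a < 1"
  shows "\<lfloor>a + real k\<rfloor> = int k"
  by (rule floor_unique) (use assms in auto)

lemma emb_qN:
  assumes S: "S \<in> Sig" and Y: "Y \<in> Ys S" and k: "k \<in> Kset S Y"
  shows "qN b Sig (emb Y k) = Y"
proof -
  have P: "\<forall>\<rho>. 0 \<le> aN b Sig Y \<rho> \<and> aN b Sig Y \<rho> < 1"
    using Ys_props[OF S Y] by blast
  have "(\<lambda>\<rho>. \<lfloor>aN b Sig (emb Y k) \<rho>\<rfloor>) = (\<lambda>\<rho>. int (k \<rho>))"
  proof
    fix \<rho> show "\<lfloor>aN b Sig (emb Y k) \<rho>\<rfloor> = int (k \<rho>)"
      unfolding emb_aN[OF S Y k] by (rule floor_frac_plus) (use P in auto)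
  qed
  then show ?thesis unfolding qN_lc by (simp add: emb_def)
qed

lemma emb_supp:
  assumes S: "S \<in> Sig" and Y: "Y \<in> Ys S" and k: "k \<in> Kset S Y"
  shows "{\<rho>. 0 < aN b Sig (emb Y k) \<rho>} = S"
proof -
  have P: "\<forall>\<rho>. 0 \<le> aN b Sig Y \<rho> \<and> aN b Sig Y \<rho> < 1" "\<forall>\<rho>. \<rho> \<notin> S \<longrightarrow> aN b Sig Y \<rho> = 0"
    using Ys_props[OF S Y] by blast+
  have "0 < aN b Sig Y \<rho> + real (k \<rho>) \<longleftrightarrow> \<rho> \<in> S" for \<rho>
  proof (cases "\<rho> \<in> S")
    case True
    then show ?thesis using k P(1)[rule_format, of \<rho>] unfolding Kset_def
      by (cases "aN b Sig Y \<rho> = 0") auto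
  next
    case False
    then show ?thesis using k P(2) unfolding Kset_def by auto
  qed
  then show ?thesis unfolding emb_aN[OF S Y k] by auto
qed

lemma emb_Nset:
  assumes S: "S \<in> Sig" and Y: "Y \<in> Ys S"
  shows "emb Y k \<in> Nset ns"
  using Ys_props[OF S Y] by (auto simp: emb_def Nset_eq mem_Times_iff)

lemma emb_Bset:
  assumes S: "S \<in> Sig" and Y: "Y \<in> Ys S" and k: "k \<in> Kset S Y"
  shows "emb Y k \<in> Bset S Y"
  unfolding Bset_def using emb_Nset[OF S Y] emb_supp[OF S Y k] emb_qN[OF S Y k] by blast

lemma emb_inj:
  assumes S: "S \<in> Sig" and Y: "Y \<in> Ys S"
  shows "inj_on (emb Y) (Kset S Y)"
proof
  fix k k' assume k: "k \<in> Kset S Y" and k': "k' \<in> Kset S Y" and eq: "emb Y k = emb Y k'"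
  have "(\<lambda>\<rho>. aN b Sig Y \<rho> + real (k \<rho>)) = (\<lambda>\<rho>. aN b Sig Y \<rho> + real (k' \<rho>))"
    using emb_aN[OF S Y k] emb_aN[OF S Y k'] eq by simp
  then show "k = k'" by (auto simp: fun_eq_iff dest: fun_cong)
qed

lemma Bset_sub:
  assumes S: "S \<in> Sig" and Y: "Y \<in> Ys S"
  shows "Bset S Y \<subseteq> emb Y ` Kset S Y"
proof
  fix n assume n: "n \<in> Bset S Y"
  then have nN: "n \<in> Nset ns" and supp: "{\<rho>. 0 < aN b Sig n \<rho>} = S" and qn: "qN b Sig n = Y"
    by (auto simp: Bset_def)
  define k where "k \<rho> = nat \<lfloor>aN b Sig n \<rho>\<rfloor>" for \<rho>
  have fl: "int (k \<rho>) = \<lfloor>aN b Sig n \<rho>\<rfloor>" for \<rho>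
    unfolding k_def using aN_nonneg[of n \<rho>] by simp
  have aY: "aN b Sig Y = (\<lambda>\<rho>. frac (aN b Sig n \<rho>))"
    unfolding qn[symmetric] by (rule aN_qN[OF fan])
  have "k \<in> Kset S Y"
    unfolding Kset_def
  proof (intro CollectI conjI allI impI ballI)
    fix \<rho> assume "\<rho> \<notin> S"
    then have "aN b Sig n \<rho> = 0" using supp aN_nonneg[of n \<rho>] by force
    then show "k \<rho> = 0" by (simp add: k_def)
  next
    fix \<rho> assume "\<rho> \<in> S" and f0: "aN b Sig Y \<rho> = 0"
    then have pos: "0 < aN b Sig n \<rho>" using supp by blast
    have "aN b Sig n \<rho> = of_int \<lfloor>aN b Sig n \<rho>\<rfloor>" using f0 unfolding aY by (simp add: frac_def)
    then have "0 < \<lfloor>aN b Sig n \<rho>\<rfloor>" using pos by linarith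
    then have "1 \<le> int (k \<rho>)" using fl[of \<rho>] by linarith
    then show "1 \<le> k \<rho>" by simp
  qed
  moreover have "emb Y k = n"
  proof -
    have "lc b (\<lambda>\<rho>. int (k \<rho>)) = lc b (\<lambda>\<rho>. \<lfloor>aN b Sig n \<rho>\<rfloor>)" using fl by simp
    then show ?thesis
      unfolding emb_def qn[symmetric] qN_lc by (simp add: prod_eq_iff)
  qed
  ultimately show "n \<in> emb Y ` Kset S Y" by blast
qed

lemma Bset_bij:
  assumes S: "S \<in> Sig" and Y: "Y \<in> Ys S"
  shows "bij_betw (emb Y) (Kset S Y) (Bset S Y)"
  unfolding bij_betw_def using emb_inj[OF S Y] Bset_sub[OF S Y] emb_Bset[OF S Y] by blast

end


context L begin

definition fN :: "'d Nel \<Rightarrow> complex" where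
  "fN n = (of_nat q :: complex) powr (- phiN b Sig sr sY n) * cnj (psi n)"

definition XY :: "'d Nel \<Rightarrow> complex" where
  "XY Y = (of_nat q :: complex) powr (- XiY b Sig sr sY Y) * cnj (psi Y)"

definition cY :: "'d Nel \<Rightarrow> complex" where
  "cY Y = (if Y = zeroN then 1 else XY Y)"

lemma emb_addN:
  assumes "Y \<in> Nset ns"
  shows "emb Y k = addN ns Y (lc b (\<lambda>\<rho>. int (k \<rho>)), \<lambda>i. 0)"
  using assms by (auto simp: emb_def addN_def Nset_def fun_eq_iff)

lemma psi_emb:
  assumes S: "S \<in> Sig" and Y: "Y \<in> Ys S" and k: "k \<in> Kset S Y"
  shows "psi (emb Y k) = psi Y * (\<Prod>\<rho>\<in>S. pr (b \<rho>) ^ k \<rho>)"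
proof -
  have YN: "Y \<in> Nset ns" using Ys_props[OF S Y] by blast
  have "psi (emb Y k) = psi Y * pr (lc b (\<lambda>\<rho>. int (k \<rho>)))"
    unfolding emb_addN[OF YN] pr_def using psi_hom YN zero_tors_Nset by blast
  also have "pr (lc b (\<lambda>\<rho>. int (k \<rho>))) = (\<Prod>\<rho>\<in>UNIV. pr (b \<rho>) ^ k \<rho>)" by (rule pr_lc)
  also have "\<dots> = (\<Prod>\<rho>\<in>S. pr (b \<rho>) ^ k \<rho>)"
    by (rule prod.mono_neutral_right) (use k in \<open>auto simp: Kset_def\<close>)
  finally show ?thesis .
qed

lemma powr_part:
  "(of_nat q :: complex) powr (- (\<Sum>\<rho>\<in>S. of_nat (k \<rho>) * sr \<rho>))
     = (\<Prod>\<rho>\<in>S. ((of_nat q :: complex) powr (- sr \<rho>)) ^ k \<rho>)"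
proof -
  have "- (\<Sum>\<rho>\<in>S. of_nat (k \<rho>) * sr \<rho>) = (\<Sum>\<rho>\<in>S. of_nat (k \<rho>) * (- sr \<rho>))"
    by (simp add: sum_negf)
  then have "(of_nat q :: complex) powr (- (\<Sum>\<rho>\<in>S. of_nat (k \<rho>) * sr \<rho>))
      = (of_nat q :: complex) powr (\<Sum>\<rho>\<in>S. of_nat (k \<rho>) * (- sr \<rho>))" by simp
  also have "\<dots> = (\<Prod>\<rho>\<in>S. (of_nat q :: complex) powr (of_nat (k \<rho>) * (- sr \<rho>)))"
    by (rule cpowr_sum[OF q_ne0]) simp
  also have "\<dots> = (\<Prod>\<rho>\<in>S. ((of_nat q :: complex) powr (- sr \<rho>)) ^ k \<rho>)"
    by (rule prod.cong[OF refl], rule cpowr_nat_mult[OF q_ne0])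
  finally show ?thesis .
qed

lemma sum_aN_emb:
  assumes S: "S \<in> Sig" and Y: "Y \<in> Ys S" and k: "k \<in> Kset S Y"
  shows "(\<Sum>\<rho>\<in>UNIV. of_real (aN b Sig (emb Y k) \<rho>) * sr \<rho>)
       = (\<Sum>\<rho>\<in>UNIV. of_real (aN b Sig Y \<rho>) * sr \<rho>) + (\<Sum>\<rho>\<in>S. of_nat (k \<rho>) * sr \<rho>)"
proof -
  have "(\<Sum>\<rho>\<in>UNIV. of_real (aN b Sig (emb Y k) \<rho>) * sr \<rho>)
       = (\<Sum>\<rho>\<in>UNIV. of_real (aN b Sig Y \<rho>) * sr \<rho>) + (\<Sum>\<rho>\<in>UNIV. of_nat (k \<rho>) * sr \<rho>)"
    unfolding emb_aN[OF S Y k] by (simp add: distrib_right sum.distrib)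
  also have "(\<Sum>\<rho>\<in>UNIV. of_nat (k \<rho>) * sr \<rho>) = (\<Sum>\<rho>\<in>S. of_nat (k \<rho>) * sr \<rho>)"
    by (rule sum_UNIV_outside) (use k in \<open>auto simp: Kset_def\<close>)
  finally show ?thesis .
qed

lemma fN_emb:
  assumes S: "S \<in> Sig" and Y: "Y \<in> Ys S" and k: "k \<in> Kset S Y"
  shows "fN (emb Y k) = cY Y * (\<Prod>\<rho>\<in>S. X \<rho> ^ k \<rho>)"
proof -
  define T where "T = (\<Sum>\<rho>\<in>S. of_nat (k \<rho>) * sr \<rho>)"
  have cpsi: "cnj (psi (emb Y k)) = cnj (psi Y) * (\<Prod>\<rho>\<in>S. cnj (pr (b \<rho>)) ^ k \<rho>)"
    unfolding psi_emb[OF S Y k] by simp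
  have Xp: "(\<Prod>\<rho>\<in>S. X \<rho> ^ k \<rho>) = (of_nat q :: complex) powr (- T) * (\<Prod>\<rho>\<in>S. cnj (pr (b \<rho>)) ^ k \<rho>)"
    unfolding T_def powr_part X_def pr_def by (simp add: power_mult_distrib prod.distrib)
  have qe: "qN b Sig (emb Y k) = Y" by (rule emb_qN[OF S Y k])
  show ?thesis
  proof (cases "Y = zeroN")
    case True
    have "phiN b Sig sr sY (emb Y k) = T"
      unfolding phiN_def qe sum_aN_emb[OF S Y k] T_def using True by (simp add: aN_zero[OF fan])
    then show ?thesis unfolding fN_def cpsi Xp cY_def using True by (simp add: psi_zeroN)
  next
    case False
    have "phiN b Sig sr sY (emb Y k) = XiY b Sig sr sY Y + T"
      unfolding phiN_def qe sum_aN_emb[OF S Y k] T_def XiY_def using False by simp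
    moreover have "(of_nat q :: complex) powr (- (XiY b Sig sr sY Y + T))
       = (of_nat q :: complex) powr (- XiY b Sig sr sY Y) * (of_nat q :: complex) powr (- T)"
      by (simp only: minus_add_distrib powr_add)
    ultimately show ?thesis unfolding fN_def cpsi Xp cY_def XY_def using False
      by (simp add: ac_simps)
  qed
qed

end


lemma has_sum_finite_Union:
  fixes f :: "'a \<Rightarrow> 'b::topological_comm_monoid_add"
  assumes "finite I" "disjoint_family_on B I" "\<And>i. i \<in> I \<Longrightarrow> (f has_sum s i) (B i)"
  shows "(f has_sum (\<Sum>i\<in>I. s i)) (\<Union>i\<in>I. B i)"
  using assms
proof (induction I rule: finite_induct)
  case empty then show ?case by simp
next
  case (insert x F)
  have d: "disjoint_family_on B F" using insert.prems(1) by (auto simp: disjoint_family_on_def)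
  have "(f has_sum (s x + (\<Sum>i\<in>F. s i))) (B x \<union> (\<Union>i\<in>F. B i))"
  proof (rule has_sum_Un_disjoint)
    show "(f has_sum s x) (B x)" using insert.prems(2) by simp
    show "(f has_sum (\<Sum>i\<in>F. s i)) (\<Union>i\<in>F. B i)" using insert.IH d insert.prems(2) by simp
    show "B x \<inter> (\<Union>i\<in>F. B i) = {}"
      using insert.prems(1) insert.hyps(2) unfolding disjoint_family_on_def by fastforce
  qed
  then show ?case using insert.hyps by simp
qed

context L begin

definition tS :: "'r set \<Rightarrow> 'd Nel \<Rightarrow> complex" where
  "tS S Y = cY Y * (\<Prod>\<rho>\<in>S. if aN b Sig Y \<rho> = 0 then X \<rho> / (1 - X \<rho>) else 1 / (1 - X \<rho>))"

lemma hs_B: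
  assumes S: "S \<in> Sig" and Y: "Y \<in> Ys S"
  shows "(fN has_sum tS S Y) (Bset S Y)"
proof -
  have "((\<lambda>k. \<Prod>\<rho>\<in>S. X \<rho> ^ k \<rho>) has_sum
          (\<Prod>\<rho>\<in>S. if aN b Sig Y \<rho> = 0 then X \<rho> / (1 - X \<rho>) else 1 / (1 - X \<rho>))) (Kset S Y)"
    unfolding Kset_def by (rule geo_K) (auto simp: norm_X_lt1)
  then have "((\<lambda>k. cY Y * (\<Prod>\<rho>\<in>S. X \<rho> ^ k \<rho>)) has_sum tS S Y) (Kset S Y)"
    unfolding tS_def by (rule has_sum_cmult_right)
  then have "((\<lambda>k. fN (emb Y k)) has_sum tS S Y) (Kset S Y)"
    by (subst has_sum_cong[where g = "\<lambda>k. cY Y * (\<Prod>\<rho>\<in>S. X \<rho> ^ k \<rho>)"]) (auto simp: fN_emb[OF S Y])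
  then show ?thesis
    using has_sum_reindex_bij_betw[OF Bset_bij[OF S Y], of fN] by simp
qed

lemma ns_B:
  assumes S: "S \<in> Sig" and Y: "Y \<in> Ys S"
  shows "(\<lambda>n. norm (fN n)) summable_on (Bset S Y)"
proof -
  have "((\<lambda>k. \<Prod>\<rho>\<in>S. norm (X \<rho>) ^ k \<rho>) has_sum
          (\<Prod>\<rho>\<in>S. if aN b Sig Y \<rho> = 0 then norm (X \<rho>) / (1 - norm (X \<rho>)) else 1 / (1 - norm (X \<rho>)))) (Kset S Y)"
    unfolding Kset_def by (rule geo_K) (auto simp: norm_X_lt1)
  then have "(\<lambda>k. norm (cY Y) * (\<Prod>\<rho>\<in>S. norm (X \<rho>) ^ k \<rho>)) summable_on (Kset S Y)"
    by (intro summable_on_cmult_right) (auto simp: summable_on_def)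
  then have "(\<lambda>k. norm (fN (emb Y k))) summable_on (Kset S Y)"
    by (subst summable_on_cong[where g = "\<lambda>k. norm (cY Y) * (\<Prod>\<rho>\<in>S. norm (X \<rho>) ^ k \<rho>)"])
       (auto simp: fN_emb[OF S Y] norm_mult prod_norm[symmetric] norm_power)
  then show ?thesis
    using summable_on_reindex_bij_betw[OF Bset_bij[OF S Y], of "\<lambda>n. norm (fN n)"] by simp
qed

lemma cone_frac:
  assumes "n \<in> Nset ns"
  shows "rvec (fst (qN b Sig n)) \<in> cone_of b {\<rho>. 0 < aN b Sig n \<rho>}"
proof -
  let ?S = "{\<rho>. 0 < aN b Sig n \<rho>}"
  have "rvec (fst (qN b Sig n)) = (\<Sum>\<rho>\<in>UNIV. frac (aN b Sig n \<rho>) *\<^sub>R rvec (b \<rho>))"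
    by (rule rvec_fst_qN[OF fan])
  also have "\<dots> = (\<Sum>\<rho>\<in>?S. frac (aN b Sig n \<rho>) *\<^sub>R rvec (b \<rho>))"
  proof (rule sum_UNIV_outside, intro allI impI)
    fix \<rho> assume "\<rho> \<notin> ?S"
    then have "aN b Sig n \<rho> = 0" using aN_nonneg[of n \<rho>] by simp
    then show "frac (aN b Sig n \<rho>) *\<^sub>R rvec (b \<rho>) = 0" by simp
  qed
  finally have eq: "rvec (fst (qN b Sig n)) = (\<Sum>\<rho>\<in>?S. frac (aN b Sig n \<rho>) *\<^sub>R rvec (b \<rho>))" .
  show ?thesis unfolding cone_of_def mem_Collect_eq
    by (rule exI[of _ "\<lambda>\<rho>. frac (aN b Sig n \<rho>)"]) (simp add: eq frac_ge_0)
qed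

lemma Nset_Union: "Nset ns = (\<Union>p\<in>Sigma Sig Ys. Bset (fst p) (snd p))"
proof
  show "(\<Union>p\<in>Sigma Sig Ys. Bset (fst p) (snd p)) \<subseteq> Nset ns" by (auto simp: Bset_def)
next
  show "Nset ns \<subseteq> (\<Union>p\<in>Sigma Sig Ys. Bset (fst p) (snd p))"
  proof
    fix n :: "'d Nel" assume n: "n \<in> Nset ns"
    define S where "S = {\<rho>. 0 < aN b Sig n \<rho>}"
    have S: "S \<in> Sig" unfolding S_def by (rule supp_Sig)
    have Y: "qN b Sig n \<in> Ys S"
    proof (cases "qN b Sig n = zeroN")
      case True then show ?thesis by (simp add: Ys_def)
    next
      case False
      then have "qN b Sig n \<in> pi0star ns b Sig" using n by (auto simp: pi0star_def)
      then show ?thesis using cone_frac[OF n] unfolding Ys_def S_def by blast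
    qed
    have "n \<in> Bset S (qN b Sig n)" using n by (simp add: Bset_def S_def)
    then show "n \<in> (\<Union>p\<in>Sigma Sig Ys. Bset (fst p) (snd p))" using S Y by force
  qed
qed

lemma Bset_disj: "disjoint_family_on (\<lambda>p. Bset (fst p) (snd p)) (Sigma Sig Ys)"
  unfolding disjoint_family_on_def Bset_def by (auto simp: prod_eq_iff)

lemma finite_Ys: "finite (Ys S)"
proof -
  have "Ys S \<subseteq> insert zeroN (qN b Sig ` Nset ns)" by (auto simp: Ys_def pi0star_def)
  then show ?thesis using finite_qN_image[OF fan] by (meson finite_insert finite_subset)
qed

lemma finite_Sigma: "finite (Sigma Sig Ys)"
  by (rule finite_SigmaI) (simp_all add: finite_Ys)

lemma total_has_sum: "(fN has_sum (\<Sum>p\<in>Sigma Sig Ys. tS (fst p) (snd p))) (Nset ns)"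
  unfolding Nset_Union
  by (rule has_sum_finite_Union[OF finite_Sigma Bset_disj]) (auto intro: hs_B)

lemma total_summable: "(\<lambda>n. norm (fN n)) summable_on (Nset ns)"
proof -
  have "((\<lambda>n. norm (fN n)) has_sum (\<Sum>p\<in>Sigma Sig Ys. infsum (\<lambda>n. norm (fN n)) (Bset (fst p) (snd p)))) (Nset ns)"
    unfolding Nset_Union
    by (rule has_sum_finite_Union[OF finite_Sigma Bset_disj], rule has_sum_infsum, rule ns_B) auto
  then show ?thesis by (auto simp: summable_on_def)
qed

lemma prod_if_div:
  "(\<Prod>\<rho>\<in>S. if P \<rho> then X \<rho> / (1 - X \<rho>) else 1 / (1 - X \<rho>))
     = (\<Prod>\<rho>\<in>{\<rho>\<in>S. P \<rho>}. X \<rho>) / (\<Prod>\<rho>\<in>S. (1 - X \<rho>))"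
proof -
  have "(\<Prod>\<rho>\<in>S. if P \<rho> then X \<rho> / (1 - X \<rho>) else 1 / (1 - X \<rho>))
      = (\<Prod>\<rho>\<in>S. (if P \<rho> then X \<rho> else 1) / (1 - X \<rho>))"
    by (rule prod.cong) auto
  also have "\<dots> = (\<Prod>\<rho>\<in>S. (if P \<rho> then X \<rho> else 1)) / (\<Prod>\<rho>\<in>S. (1 - X \<rho>))"
    by (rule prod_dividef)
  also have "(\<Prod>\<rho>\<in>S. (if P \<rho> then X \<rho> else 1)) = (\<Prod>\<rho>\<in>{\<rho>\<in>S. P \<rho>}. X \<rho>)"
    by (simp add: prod.inter_filter)
  finally show ?thesis .
qed

lemma sum_Ys:
  assumes S: "S \<in> Sig"
  shows "(\<Sum>Y\<in>Ys S. tS S Y) = R_sigma ns b Sig S X XY"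
proof -
  define P where "P = {Y \<in> pi0star ns b Sig. rvec (fst Y) \<in> cone_of b S}"
  have Ys: "Ys S = insert zeroN P" by (simp add: Ys_def P_def)
  have z: "zeroN \<notin> P" by (simp add: P_def pi0star_def)
  have fP: "finite P" using finite_Ys[of S] Ys by simp
  have t0: "tS S zeroN = (\<Prod>\<rho>\<in>S. X \<rho>) / (\<Prod>\<rho>\<in>S. (1 - X \<rho>))"
    unfolding tS_def cY_def prod_if_div by (simp add: aN_zero[OF fan])
  have tY: "tS S Y = XY Y * (\<Prod>\<rho>\<in>{\<rho>\<in>S. aN b Sig Y \<rho> = 0}. X \<rho>) / (\<Prod>\<rho>\<in>S. (1 - X \<rho>))"
    if "Y \<in> P" for Y
    using that z unfolding tS_def cY_def prod_if_div by auto
  have "(\<Sum>Y\<in>Ys S. tS S Y) = tS S zeroN + (\<Sum>Y\<in>P. tS S Y)"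
    unfolding Ys using z fP by simp
  also have "\<dots> = (\<Prod>\<rho>\<in>S. X \<rho>) / (\<Prod>\<rho>\<in>S. (1 - X \<rho>))
      + (\<Sum>Y\<in>P. XY Y * (\<Prod>\<rho>\<in>{\<rho>\<in>S. aN b Sig Y \<rho> = 0}. X \<rho>)) / (\<Prod>\<rho>\<in>S. (1 - X \<rho>))"
    unfolding t0 sum_divide_distrib using tY by simp
  also have "\<dots> = R_sigma ns b Sig S X XY"
    unfolding R_sigma_def P_def by (simp add: add_divide_distrib)
  finally show ?thesis .
qed

lemma total_value: "(\<Sum>p\<in>Sigma Sig Ys. tS (fst p) (snd p)) = R_Sigma ns b Sig X XY"
proof -
  have "(\<Sum>p\<in>Sigma Sig Ys. tS (fst p) (snd p)) = (\<Sum>S\<in>Sig. \<Sum>Y\<in>Ys S. tS S Y)"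
    by (subst sum.Sigma) (simp_all add: finite_Ys split_def)
  also have "\<dots> = (\<Sum>S\<in>Sig. R_sigma ns b Sig S X XY)"
    by (rule sum.cong) (simp_all add: sum_Ys)
  finally show ?thesis unfolding R_Sigma_def .
qed

end


context L begin

lemma countable_Nset: "countable (Nset ns)"
  unfolding Nset_eq by (rule countable_SIGMA) (auto intro: countable_finite finite_Gset)

lemma addN_zeroN: "n \<in> Nset ns \<Longrightarrow> addN ns n zeroN = n"
  by (auto simp: addN_def zeroN_def Nset_def fun_eq_iff prod_eq_iff)

lemma addN_cancel:
  assumes n: "n \<in> Nset ns" and u: "u \<in> Nset ns" and eq: "addN ns n u = n"
  shows "u = zeroN"
proof -
  have f: "fst u = 0" using eq by (auto simp: addN_def prod_eq_iff)
  have "snd u i = 0" for i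
  proof (cases "i < length ns")
    case True
    have ni: "0 \<le> snd n i" "snd n i < int (ns ! i)" using n True by (auto simp: Nset_def)
    have ui: "0 \<le> snd u i" "snd u i < int (ns ! i)" using u True by (auto simp: Nset_def)
    have "(snd n i + snd u i) mod int (ns ! i) = snd n i"
      using eq True by (auto simp: addN_def prod_eq_iff fun_eq_iff dest: spec[of _ i])
    moreover have "(snd n i + snd u i) mod int (ns ! i) = snd n i + snd u i \<or>
                   (snd n i + snd u i) mod int (ns ! i) = snd n i + snd u i - int (ns ! i)"
    proof (cases "snd n i + snd u i < int (ns ! i)")
      case True then show ?thesis using ni ui by (simp add: mod_pos_pos_trivial)
    next
      case False
      then have "(snd n i + snd u i) mod int (ns ! i) = (snd n i + snd u i - int (ns ! i)) mod int (ns ! i)"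
        by (metis mod_add_self2 diff_add_cancel)
      also have "\<dots> = snd n i + snd u i - int (ns ! i)"
        using False ni ui by (intro mod_pos_pos_trivial) auto
      finally show ?thesis by simp
    qed
    ultimately show ?thesis using ni ui by auto
  next
    case False then show ?thesis using u by (auto simp: Nset_def)
  qed
  then show ?thesis using f by (auto simp: zeroN_def prod_eq_iff fun_eq_iff)
qed

lemma integral_part:
  fixes M :: "('a::ab_group_add) measure" and lg :: "'a \<Rightarrow> 'd Nel" and f :: "'d Nel \<Rightarrow> complex"
  assumes space_M: "space M = UNIV"
    and translation_invariant: "\<forall>t A. A \<in> sets M \<longrightarrow>
           ((+) t) ` A \<in> sets M \<and> emeasure M (((+) t) ` A) = emeasure M A"
    and lg_meas: "lg \<in> M \<rightarrow>\<^sub>M count_space UNIV"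
    and lg_range: "\<forall>x. lg x \<in> Nset ns"
    and lg_surj: "Nset ns \<subseteq> range lg"
    and lg_hom: "\<forall>x y. lg (x + y) = addN ns (lg x) (lg y)"
    and kernel_measure: "emeasure M {x. lg x = zeroN} = 1"
    and summ: "(\<lambda>n. norm (f n)) summable_on Nset ns"
  shows "integrable M (\<lambda>x. f (lg x)) \<and> integral\<^sup>L M (\<lambda>x. f (lg x)) = infsum f (Nset ns)"
proof -
  have lg0: "lg 0 = zeroN"
    using addN_cancel[OF lg_range[rule_format] lg_range[rule_format], of 0 0] lg_hom[rule_format, of 0 0]
    by simp
  have fibsets: "lg -` {n} \<inter> space M \<in> sets M" for n
    using lg_meas by (simp add: measurable_def)
  have fib: "emeasure M {x. lg x = n} = 1" if n: "n \<in> Nset ns" for n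
  proof -
    obtain t where t: "lg t = n" using lg_surj n by blast
    have "{x. lg x = n} = (+) t ` {x. lg x = zeroN}"
    proof
      show "(+) t ` {x. lg x = zeroN} \<subseteq> {x. lg x = n}"
        using lg_hom addN_zeroN[OF n] t by auto
      show "{x. lg x = n} \<subseteq> (+) t ` {x. lg x = zeroN}"
      proof
        fix x assume x: "x \<in> {x. lg x = n}"
        have "addN ns (lg t) (lg (x - t)) = lg t"
          using lg_hom[rule_format, of t "x - t"] x t by simp
        then have "lg (x - t) = zeroN" using addN_cancel lg_range by blast
        moreover have "x = t + (x - t)" by simp
        ultimately show "x \<in> (+) t ` {x. lg x = zeroN}" by blast
      qed
    qed
    moreover have "{x. lg x = zeroN} \<in> sets M"
      using fibsets[of zeroN] space_M by (simp add: vimage_def)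
    ultimately show ?thesis using translation_invariant kernel_measure by simp
  qed
  have meas: "lg \<in> M \<rightarrow>\<^sub>M count_space (Nset ns)"
    unfolding measurable_count_space_eq_countable[OF countable_Nset]
    using lg_range fibsets by auto
  have distr_eq: "distr M (count_space (Nset ns)) lg = count_space (Nset ns)"
  proof (rule measure_eqI)
    show "sets (distr M (count_space (Nset ns)) lg) = sets (count_space (Nset ns))" by simp
  next
    fix A assume A: "A \<in> sets (distr M (count_space (Nset ns)) lg)"
    then have AN: "A \<subseteq> Nset ns" by simp
    have "emeasure (distr M (count_space (Nset ns)) lg) A = emeasure M (lg -` A \<inter> space M)"
      using A by (simp add: emeasure_distr[OF meas])
    also have "lg -` A \<inter> space M = (\<Union>n\<in>A. {x. lg x = n})"
      using space_M by auto
    also have "emeasure M (\<Union>n\<in>A. {x. lg x = n}) = (\<integral>\<^sup>+n. emeasure M {x. lg x = n} \<partial>count_space A)"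
    proof (rule emeasure_UN_countable)
      show "{x. lg x = n} \<in> sets M" for n using fibsets[of n] space_M by (simp add: vimage_def)
      show "countable A" using countable_Nset AN by (rule countable_subset[rotated])
      show "disjoint_family_on (\<lambda>n. {x. lg x = n}) A" by (auto simp: disjoint_family_on_def)
    qed
    also have "\<dots> = (\<integral>\<^sup>+n. 1 \<partial>count_space A)"
      by (rule nn_integral_cong) (use AN fib in auto)
    also have "\<dots> = emeasure (count_space A) A" by simp
    also have "\<dots> = emeasure (count_space (Nset ns)) A"
      using AN by (simp add: emeasure_count_space)
    finally show "emeasure (distr M (count_space (Nset ns)) lg) A = emeasure (count_space (Nset ns)) A" .
  qed
  have fm: "f \<in> borel_measurable (count_space (Nset ns))" by simp
  have absS: "Infinite_Set_Sum.abs_summable_on f (Nset ns)"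
    using abs_summable_equivalent summ by blast
  have int_cs: "integrable (count_space (Nset ns)) f"
    using absS unfolding Infinite_Set_Sum.abs_summable_on_def .
  have "integrable M (\<lambda>x. f (lg x))"
    using integrable_distr_eq[OF meas fm] int_cs distr_eq by simp
  moreover have "integral\<^sup>L M (\<lambda>x. f (lg x)) = integral\<^sup>L (count_space (Nset ns)) f"
    using integral_distr[OF meas fm] distr_eq by simp
  moreover have "integral\<^sup>L (count_space (Nset ns)) f = infsum f (Nset ns)"
    using infsetsum_infsum[OF absS] unfolding infsetsum_def .
  ultimately show ?thesis by simp
qed

end

theorem mainTheorem11:
  fixes ns :: "nat list"
    and b :: "'r::finite \<Rightarrow> int ^ ('d::finite)"
    and gb :: "'r \<Rightarrow> nat \<Rightarrow> int"
    and Sig :: "'r set set"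
    and q :: nat
    and M :: "('a::ab_group_add) measure"
    and lg :: "'a \<Rightarrow> 'd Nel"
    and psi :: "'d Nel \<Rightarrow> complex"
    and sr :: "'r \<Rightarrow> complex"
    and sY :: "'d Nel \<Rightarrow> complex"
  assumes ns_pos: "\<forall>i < length ns. 0 < ns ! i"
    and fan: "complete_simplicial_fan b Sig"
    and beta_tors: "\<forall>\<rho>. (b \<rho>, gb \<rho>) \<in> Nset ns"
    and coker_finite: "\<exists>m::int. 0 < m \<and> (\<forall>n\<in>Nset ns. smultN ns m n \<in> beta_image ns b gb)"
    and q_prime_power: "\<exists>p k. prime p \<and> 1 \<le> k \<and> q = p ^ k"
    and space_M: "space M = UNIV"
    and translation_invariant: "\<forall>t A. A \<in> sets M \<longrightarrow>
           ((+) t) ` A \<in> sets M \<and> emeasure M (((+) t) ` A) = emeasure M A"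
    and lg_meas: "lg \<in> M \<rightarrow>\<^sub>M count_space UNIV"
    and lg_range: "\<forall>x. lg x \<in> Nset ns"
    and lg_surj: "Nset ns \<subseteq> range lg"
    and lg_hom: "\<forall>x y. lg (x + y) = addN ns (lg x) (lg y)"
    and kernel_measure: "emeasure M {x. lg x = zeroN} = 1"
    and psi_unit: "\<forall>n\<in>Nset ns. norm (psi n) = 1"
    and psi_hom: "\<forall>n\<in>Nset ns. \<forall>m\<in>Nset ns. psi (addN ns n m) = psi n * psi m"
    and Re_s: "\<forall>\<rho>. 0 < Re (sr \<rho>)"
  shows "integrable M (\<lambda>x. inverse (Hv q b Sig sr sY lg x) * cnj (psi (lg x)))
       \<and> (\<lambda>n. norm ((of_nat q :: complex) powr (- phiN b Sig sr sY n) * cnj (psi n))) summable_on Nset ns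
       \<and> ((\<lambda>n. (of_nat q :: complex) powr (- phiN b Sig sr sY n) * cnj (psi n)) has_sum
            R_Sigma ns b Sig
              (\<lambda>\<rho>. (of_nat q :: complex) powr (- sr \<rho>) * cnj (psi (b \<rho>, (\<lambda>i. 0))))
              (\<lambda>Y. (of_nat q :: complex) powr (- XiY b Sig sr sY Y) * cnj (psi Y))) (Nset ns)
       \<and> integral\<^sup>L M (\<lambda>x. inverse (Hv q b Sig sr sY lg x) * cnj (psi (lg x)))
           = R_Sigma ns b Sig
              (\<lambda>\<rho>. (of_nat q :: complex) powr (- sr \<rho>) * cnj (psi (b \<rho>, (\<lambda>i. 0))))
              (\<lambda>Y. (of_nat q :: complex) powr (- XiY b Sig sr sY Y) * cnj (psi Y))"
  proof -
  obtain p k where pk: "prime p" "1 \<le> k" "q = p ^ k" using q_prime_power by blast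
  have p1: "1 < p" by (rule prime_gt_1_nat[OF pk(1)])
  have q_gt: "1 < q" unfolding pk(3) by (rule one_less_power[OF p1]) (use pk(2) in simp)
  interpret L ns b Sig q psi sr sY
    using ns_pos fan q_gt psi_unit psi_hom Re_s by unfold_locales
  have Hinv: "(\<lambda>x. inverse (Hv q b Sig sr sY lg x) * cnj (psi (lg x))) = (\<lambda>x. fN (lg x))"
    by (simp add: fun_eq_iff Hv_def fN_def powr_minus)
  have fNeq: "(\<lambda>n. (of_nat q :: complex) powr (- phiN b Sig sr sY n) * cnj (psi n)) = fN"
    by (simp add: fun_eq_iff fN_def)
  have NEq: "(\<lambda>n. norm ((of_nat q :: complex) powr (- phiN b Sig sr sY n) * cnj (psi n))) = (\<lambda>n. norm (fN n))"
    by (simp add: fun_eq_iff fN_def)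
  have Xeq: "(\<lambda>\<rho>. (of_nat q :: complex) powr (- sr \<rho>) * cnj (psi (b \<rho>, (\<lambda>i. 0)))) = X"
    by (simp add: fun_eq_iff X_def)
  have XYeq: "(\<lambda>Y. (of_nat q :: complex) powr (- XiY b Sig sr sY Y) * cnj (psi Y)) = XY"
    by (simp add: fun_eq_iff XY_def)
  have HS: "(fN has_sum R_Sigma ns b Sig X XY) (Nset ns)"
    using total_has_sum unfolding total_value .
  have IP: "integrable M (\<lambda>x. fN (lg x)) \<and> integral\<^sup>L M (\<lambda>x. fN (lg x)) = infsum fN (Nset ns)"
    by (rule integral_part[OF space_M translation_invariant lg_meas lg_range lg_surj lg_hom kernel_measure total_summable])
  have "infsum fN (Nset ns) = R_Sigma ns b Sig X XY" using HS by (rule infsumI)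
  then show ?thesis
    unfolding Hinv NEq fNeq Xeq XYeq using IP HS total_summable by simp
qed

end
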